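(* Let $N>0$; all statements below concern $\tau\in(0,1)$. (i) There exists a unique $\tau_1^{(1)}\in(\frac12,\frac1{\sqrt2})$ such that $\beta_2^*(\tau)-\tau\beta_1^{**}(\tau)=2$ holds if and only if $\tau=\tau_1^{(1)}$; equivalently, [$\beta_2^*(\tau)=\underline\beta_2(\tau)$ and $\beta_1^{**}(\tau)=\overline\beta_1(\tau)$] holds if and only if $\tau=\tau_1^{(1)}$. More precisely, $\beta_2^*(\tau)-\tau\beta_1^{**}(\tau)>2$ if and only if $\tau\in(0,\tau_1^{(1)})$, and $0<\beta_1^{**}(\tau)<\overline\beta_1(\tau)$ for all $\tau\in(0,1)\setminus\{\tau_1^{(1)}\}$. (ii) There exists a unique $\tau_1^{(2)}\in(\frac12,\frac1{\sqrt2})$ such that $\beta_1^*(\tau)-\tau\beta_2^{**}(\tau)=2(N+1)$ holds if and only if $\tau=\tau_1^{(2)}$; equivalently, [$\beta_1^*(\tau)=\underline\beta_1(\tau)$ and $\beta_2^{**}(\tau)=\overline\beta_2(\tau)$] holds if and only if $\tau=\tau_1^{(2)}$. More precisely, $\beta_1^*(\tau)-\tau\beta_2^{**}(\tau)>2(N+1)$ if and only if $\tau\in(0,\tau_1^{(2)})$, and $0<\beta_2^{**}(\tau)<\overline\beta_2(\tau)$ for all $\tau\in(0,1)\setminus\{\tau_1^{(2)}\}$. Moreover $\frac12<\tau_1^{(2)}<\tau_1^{(1)}<\frac1{\sqrt2}$.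
   Context: With $D=(N+1)^2+2\tau(N+1)+1$: $$\underline\beta_1(\tau)=\tfrac{2}{1-\tau^2}(N+1+\tau+\tau\sqrt D),\qquad \overline\beta_1(\tau)=\tfrac{2}{1-\tau^2}(N+1+\tau+\sqrt D),$$ $$\underline\beta_2(\tau)=\tfrac{2}{1-\tau^2}(1+\tau(N+1)+\tau\sqrt D),\qquad \overline\beta_2(\tau)=\tfrac{2}{1-\tau^2}(1+\tau(N+1)+\sqrt D);$$ $$\beta_1^*(\tau)=4(N+1)+8\tau,\quad \beta_2^*(\tau)=4+8\tau(N+1),\quad \beta_1^{**}(\tau)=8\tau(1+2\tau(N+1)),\quad \beta_2^{**}(\tau)=8\tau(N+1+2\tau).$$ *)

theory Defs
  imports Complex_Main
begin

definition DD :: "nat \<Rightarrow> real \<Rightarrow> real" where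
  "DD N \<tau> = (real N + 1)^2 + 2 * \<tau> * (real N + 1) + 1"

definition beta1_low :: "nat \<Rightarrow> real \<Rightarrow> real" where
  "beta1_low N \<tau> = 2 / (1 - \<tau>^2) * (real N + 1 + \<tau> + \<tau> * sqrt (DD N \<tau>))"

definition beta1_up :: "nat \<Rightarrow> real \<Rightarrow> real" where
  "beta1_up N \<tau> = 2 / (1 - \<tau>^2) * (real N + 1 + \<tau> + sqrt (DD N \<tau>))"

definition beta2_low :: "nat \<Rightarrow> real \<Rightarrow> real" where
  "beta2_low N \<tau> = 2 / (1 - \<tau>^2) * (1 + \<tau> * (real N + 1) + \<tau> * sqrt (DD N \<tau>))"

definition beta2_up :: "nat \<Rightarrow> real \<Rightarrow> real" where
  "beta2_up N \<tau> = 2 / (1 - \<tau>^2) * (1 + \<tau> * (real N + 1) + sqrt (DD N \<tau>))"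

definition beta1_star :: "nat \<Rightarrow> real \<Rightarrow> real" where
  "beta1_star N \<tau> = 4 * (real N + 1) + 8 * \<tau>"

definition beta2_star :: "nat \<Rightarrow> real \<Rightarrow> real" where
  "beta2_star N \<tau> = 4 + 8 * \<tau> * (real N + 1)"

definition beta1_sstar :: "nat \<Rightarrow> real \<Rightarrow> real" where
  "beta1_sstar N \<tau> = 8 * \<tau> * (1 + 2 * \<tau> * (real N + 1))"

definition beta2_sstar :: "nat \<Rightarrow> real \<Rightarrow> real" where
  "beta2_sstar N \<tau> = 8 * \<tau> * (real N + 1 + 2 * \<tau>)"

end

theory Submission
  imports Defs
begin

lemma sq_ge_half: fixes x :: real assumes "1 / sqrt 2 \<le> x" shows "x^2 \<ge> 1/2"
proof -
  have "(1/sqrt 2)^2 \<le> x^2" using assms by (intro power_mono) auto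
  moreover have "(1/sqrt 2)^2 = (1/2::real)" by (simp add: power_divide)
  ultimately show ?thesis by simp
qed

lemma sq_lt_half: fixes x :: real assumes "0 \<le> x" "x < 1 / sqrt 2" shows "x^2 < 1/2"
proof -
  have "x^2 < (1/sqrt 2)^2" using assms by (intro power_strict_mono) auto
  moreover have "(1/sqrt 2)^2 = (1/2::real)" by (simp add: power_divide)
  ultimately show ?thesis by simp
qed

lemma half_lt_isq: "1/2 < 1 / sqrt (2::real)"
proof -
  have "sqrt 2 < (2::real)" by (rule real_less_lsqrt) auto
  thus ?thesis by (simp add: field_simps)
qed

lemma root_char:
  fixes g :: "real \<Rightarrow> real"
  assumes cont: "continuous_on {1/2..1/sqrt 2} g"
    and pos: "\<And>\<tau>. 0 < \<tau> \<Longrightarrow> \<tau> \<le> 1/2 \<Longrightarrow> g \<tau> > 0"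
    and neg: "\<And>\<tau>. 1/sqrt 2 \<le> \<tau> \<Longrightarrow> \<tau> < 1 \<Longrightarrow> g \<tau> < 0"
    and dec: "\<And>x y. 1/2 \<le> x \<Longrightarrow> x < y \<Longrightarrow> y \<le> 1/sqrt 2 \<Longrightarrow> g y < g x"
  shows "\<exists>t. 1/2 < t \<and> t < 1/sqrt 2 \<and> g t = 0 \<and> (\<forall>\<tau>\<in>{0<..<1}. g \<tau> = 0 \<longleftrightarrow> \<tau> = t)
     \<and> (\<forall>\<tau>\<in>{0<..<1}. g \<tau> > 0 \<longleftrightarrow> \<tau> < t)"
proof -
  have hl: "1/2 < 1/sqrt (2::real)" by (rule half_lt_isq)
  have isq1: "1/sqrt 2 < (1::real)" by (simp add: field_simps)
  have ga: "g (1/2) > 0" using pos by simp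
  have gb: "g (1/sqrt 2) < 0" using neg isq1 by simp
  obtain t where t: "1/2 \<le> t" "t \<le> 1/sqrt 2" "g t = 0"
    using IVT2'[of g "1/sqrt 2" 0 "1/2", OF _ _ _ cont] ga gb hl by auto
  have t1: "1/2 < t" using t ga by (cases "t = 1/2") auto
  have t2: "t < 1/sqrt 2" using t gb by (cases "t = 1/sqrt 2") auto
  have key: "(g \<tau> > 0 \<longleftrightarrow> \<tau> < t) \<and> (g \<tau> = 0 \<longleftrightarrow> \<tau> = t)" if "0 < \<tau>" "\<tau> < 1" for \<tau>
  proof (cases "\<tau> \<le> 1/2")
    case True thus ?thesis using pos[OF that(1) True] t1 by auto
  next
    case F1: False
    show ?thesis
    proof (cases "\<tau> \<ge> 1/sqrt 2")
      case True thus ?thesis using neg[OF True that(2)] t2 by auto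
    next
      case False
      consider "\<tau> < t" | "\<tau> = t" | "\<tau> > t" by linarith
      thus ?thesis
      proof cases
        case 1 thus ?thesis using dec[of \<tau> t] F1 t by auto
      next
        case 2 thus ?thesis using t by auto
      next
        case 3 thus ?thesis using dec[of t \<tau>] False t by auto
      qed
    qed
  qed
  show ?thesis using key t1 t2 t by (intro exI[of _ t]) auto
qed

definition G1 :: "real \<Rightarrow> real \<Rightarrow> real" where
  "G1 M t = 1 + 4*M*t - 4*t^2 - 8*M*t^3"
definition G2 :: "real \<Rightarrow> real \<Rightarrow> real" where
  "G2 M t = M + 4*t - 4*M*t^2 - 8*t^3"

lemma quad34: fixes x y :: real assumes "1/2 \<le> x" "x < y" shows "x^2 + x*y + y^2 \<ge> 3/4"
proof -
  have "(1/2)^2 \<le> x^2" using assms by (intro power_mono) auto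
  moreover have "(1/2)^2 \<le> y^2" using assms by (intro power_mono) auto
  moreover have "(1/2)*(1/2) \<le> x*y" using assms by (intro mult_mono) auto
  ultimately have "x^2 \<ge> 1/4" "y^2 \<ge> 1/4" "x*y \<ge> 1/4" by (simp_all add: power2_eq_square)
  thus ?thesis by linarith
qed

lemma G1_root:
  assumes M: "M > 0"
  shows "\<exists>t. 1/2 < t \<and> t < 1/sqrt 2 \<and> G1 M t = 0 \<and> (\<forall>\<tau>\<in>{0<..<1}. G1 M \<tau> = 0 \<longleftrightarrow> \<tau> = t)
     \<and> (\<forall>\<tau>\<in>{0<..<1}. G1 M \<tau> > 0 \<longleftrightarrow> \<tau> < t)"
proof (rule root_char)
  show "continuous_on {1/2..1/sqrt 2} (G1 M)" unfolding G1_def by (intro continuous_intros)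
next
  fix \<tau> :: real assume a: "0 < \<tau>" "\<tau> \<le> 1/2"
  have "\<tau>^2 \<le> (1/2)^2" using a by (intro power_mono) auto
  hence b: "1 - 4*\<tau>^2 \<ge> 0" "1 - 2*\<tau>^2 > 0" by (auto simp: power2_eq_square)
  have "4*M*\<tau>*(1-2*\<tau>^2) > 0" using a b M by simp
  moreover have "G1 M \<tau> = (1 - 4*\<tau>^2) + 4*M*\<tau>*(1-2*\<tau>^2)" unfolding G1_def by (simp add: algebra_simps power3_eq_cube power2_eq_square)
  ultimately show "G1 M \<tau> > 0" using b by linarith
next
  fix \<tau> :: real assume a: "1/sqrt 2 \<le> \<tau>" "\<tau> < 1"
  have "\<tau>^2 \<ge> 1/2" using sq_ge_half a by simp
  hence b: "1 - 4*\<tau>^2 < 0" "1 - 2*\<tau>^2 \<le> 0" by auto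
  have tp: "\<tau> > 0" using a half_lt_isq by linarith
  have "4*M*\<tau>*(1-2*\<tau>^2) \<le> 0" using b M tp by (simp add: mult_nonneg_nonpos)
  moreover have "G1 M \<tau> = (1 - 4*\<tau>^2) + 4*M*\<tau>*(1-2*\<tau>^2)" unfolding G1_def by (simp add: algebra_simps power3_eq_cube power2_eq_square)
  ultimately show "G1 M \<tau> < 0" using b by linarith
next
  fix x y :: real assume a: "1/2 \<le> x" "x < y" "y \<le> 1/sqrt 2"
  have q: "x^2 + x*y + y^2 \<ge> 3/4" using quad34 a by simp
  define Q where "Q = x^2 + x*y + y^2"
  have "M*(Q-3/4) \<ge> 0" using q M unfolding Q_def by simp
  moreover have "M*(Q-3/4) = M*Q - 3/4*M" by (simp add: algebra_simps)
  ultimately have "8*(M*Q) + 4*x + 4*y - 4*M > 0" using a M by linarith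
  hence br: "8*M*(x^2 + x*y + y^2) + 4*(x+y) - 4*M > 0" unfolding Q_def by (simp add: algebra_simps)
  have "G1 M x - G1 M y = (y-x)*(8*M*(x^2 + x*y + y^2) + 4*(x+y) - 4*M)"
    unfolding G1_def by (simp add: algebra_simps power3_eq_cube power2_eq_square)
  moreover have "(y-x)*(8*M*(x^2 + x*y + y^2) + 4*(x+y) - 4*M) > 0" using br a by simp
  ultimately show "G1 M y < G1 M x" by linarith
qed

lemma G2_root:
  assumes M: "M > 0"
  shows "\<exists>t. 1/2 < t \<and> t < 1/sqrt 2 \<and> G2 M t = 0 \<and> (\<forall>\<tau>\<in>{0<..<1}. G2 M \<tau> = 0 \<longleftrightarrow> \<tau> = t)
     \<and> (\<forall>\<tau>\<in>{0<..<1}. G2 M \<tau> > 0 \<longleftrightarrow> \<tau> < t)"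
proof (rule root_char)
  show "continuous_on {1/2..1/sqrt 2} (G2 M)" unfolding G2_def by (intro continuous_intros)
next
  fix \<tau> :: real assume a: "0 < \<tau>" "\<tau> \<le> 1/2"
  have "\<tau>^2 \<le> (1/2)^2" using a by (intro power_mono) auto
  hence b: "1 - 4*\<tau>^2 \<ge> 0" "1 - 2*\<tau>^2 > 0" by (auto simp: power2_eq_square)
  have "4*\<tau>*(1-2*\<tau>^2) > 0" using a b by simp
  moreover have "M*(1 - 4*\<tau>^2) \<ge> 0" using b M by simp
  moreover have "G2 M \<tau> = M*(1 - 4*\<tau>^2) + 4*\<tau>*(1-2*\<tau>^2)" unfolding G2_def by (simp add: algebra_simps power3_eq_cube power2_eq_square)
  ultimately show "G2 M \<tau> > 0" by linarith
next
  fix \<tau> :: real assume a: "1/sqrt 2 \<le> \<tau>" "\<tau> < 1"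
  have "\<tau>^2 \<ge> 1/2" using sq_ge_half a by simp
  hence b: "1 - 4*\<tau>^2 < 0" "1 - 2*\<tau>^2 \<le> 0" by auto
  have tp: "\<tau> > 0" using a half_lt_isq by linarith
  have "4*\<tau>*(1-2*\<tau>^2) \<le> 0" using b tp by (simp add: mult_nonneg_nonpos)
  moreover have "M*(1 - 4*\<tau>^2) < 0" using b M by (simp add: mult_pos_neg)
  moreover have "G2 M \<tau> = M*(1 - 4*\<tau>^2) + 4*\<tau>*(1-2*\<tau>^2)" unfolding G2_def by (simp add: algebra_simps power3_eq_cube power2_eq_square)
  ultimately show "G2 M \<tau> < 0" by linarith
next
  fix x y :: real assume a: "1/2 \<le> x" "x < y" "y \<le> 1/sqrt 2"
  have q: "x^2 + x*y + y^2 \<ge> 3/4" using quad34 a by simp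
  have br: "8*(x^2 + x*y + y^2) + 4*M*(x+y) - 4 > 0" using a M q
  proof -
    define Q where "Q = x^2 + x*y + y^2"
    have "4*M*(x+y) > 0" using a M by simp
    moreover have "8*Q \<ge> 6" using q[folded Q_def] by linarith
    ultimately have "8*Q + 4*M*(x+y) - 4 > 0" by linarith
    thus ?thesis unfolding Q_def .
  qed
  have "G2 M x - G2 M y = (y-x)*(8*(x^2 + x*y + y^2) + 4*M*(x+y) - 4)"
    unfolding G2_def by (simp add: algebra_simps power3_eq_cube power2_eq_square)
  moreover have "(y-x)*(8*(x^2 + x*y + y^2) + 4*M*(x+y) - 4) > 0" using br a by simp
  ultimately show "G2 M y < G2 M x" by linarith
qed


lemma L1:
  fixes N :: nat and \<tau> :: real
  assumes "0<\<tau>" "\<tau><1"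
  defines "M \<equiv> real N + 1"
  defines "h \<equiv> 4*\<tau>*(1+2*\<tau>*M)*(1-\<tau>^2) - M - \<tau>"
  shows "beta2_star N \<tau> - \<tau>*beta1_sstar N \<tau> - 2 = 2*G1 M \<tau>"
   and "DD N \<tau> - h^2 = (1-\<tau>^2)*(G1 M \<tau>)^2"
   and "\<tau>*h = 1/2 + M*\<tau> + G1 M \<tau>*(\<tau>^2-1/2)"
   and "beta1_sstar N \<tau> = 2/(1-\<tau>^2)*(M+\<tau>+h)"
   and "beta1_up N \<tau> = 2/(1-\<tau>^2)*(M+\<tau>+sqrt(DD N \<tau>))"
   and "beta2_star N \<tau> = 2/(1-\<tau>^2)*((2+4*M*\<tau>)*(1-\<tau>^2))"
   and "beta2_low N \<tau> = 2/(1-\<tau>^2)*(1+\<tau>*M+\<tau>*sqrt(DD N \<tau>))"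
   and "(2+4*M*\<tau>)*(1-\<tau>^2) = 3/2 + 2*M*\<tau> + G1 M \<tau>/2"
proof -
  have "\<tau>*\<tau> < 1*1" using assms(1,2) by (intro mult_strict_mono) auto
  hence nz: "1 - \<tau>^2 \<noteq> 0" by (simp add: power2_eq_square)
  show "beta2_star N \<tau> - \<tau>*beta1_sstar N \<tau> - 2 = 2*G1 M \<tau>"
    unfolding beta2_star_def beta1_sstar_def G1_def M_def by (simp add: algebra_simps power2_eq_square power3_eq_cube)
  show "DD N \<tau> - h^2 = (1-\<tau>^2)*(G1 M \<tau>)^2"
    unfolding DD_def G1_def h_def M_def by (simp add: algebra_simps power2_eq_square power3_eq_cube)
  show "\<tau>*h = 1/2 + M*\<tau> + G1 M \<tau>*(\<tau>^2-1/2)"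
    unfolding G1_def h_def by (simp add: algebra_simps power2_eq_square power3_eq_cube)
  show "beta1_sstar N \<tau> = 2/(1-\<tau>^2)*(M+\<tau>+h)"
    unfolding beta1_sstar_def h_def M_def using nz by (simp add: field_simps)
  show "beta1_up N \<tau> = 2/(1-\<tau>^2)*(M+\<tau>+sqrt(DD N \<tau>))"
    unfolding beta1_up_def M_def by simp
  show "beta2_star N \<tau> = 2/(1-\<tau>^2)*((2+4*M*\<tau>)*(1-\<tau>^2))"
    unfolding beta2_star_def M_def using nz by (simp add: field_simps)
  show "beta2_low N \<tau> = 2/(1-\<tau>^2)*(1+\<tau>*M+\<tau>*sqrt(DD N \<tau>))"
    unfolding beta2_low_def M_def by simp
  show "(2+4*M*\<tau>)*(1-\<tau>^2) = 3/2 + 2*M*\<tau> + G1 M \<tau>/2"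
    unfolding G1_def by (simp add: field_simps power2_eq_square power3_eq_cube)
qed

lemma L2:
  fixes N :: nat and \<tau> :: real
  assumes "0<\<tau>" "\<tau><1"
  defines "M \<equiv> real N + 1"
  defines "h \<equiv> 4*\<tau>*(M+2*\<tau>)*(1-\<tau>^2) - 1 - \<tau>*M"
  shows "beta1_star N \<tau> - \<tau>*beta2_sstar N \<tau> - 2*(real N + 1) = 2*G2 M \<tau>"
   and "DD N \<tau> - h^2 = (1-\<tau>^2)*(G2 M \<tau>)^2"
   and "\<tau>*h = M/2 + \<tau> + G2 M \<tau>*(\<tau>^2-1/2)"
   and "beta2_sstar N \<tau> = 2/(1-\<tau>^2)*(1+\<tau>*M+h)"
   and "beta2_up N \<tau> = 2/(1-\<tau>^2)*(1+\<tau>*M+sqrt(DD N \<tau>))"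
   and "beta1_star N \<tau> = 2/(1-\<tau>^2)*((2*M+4*\<tau>)*(1-\<tau>^2))"
   and "beta1_low N \<tau> = 2/(1-\<tau>^2)*(M+\<tau>+\<tau>*sqrt(DD N \<tau>))"
   and "(2*M+4*\<tau>)*(1-\<tau>^2) = 3/2*M + 2*\<tau> + G2 M \<tau>/2"
proof -
  have "\<tau>*\<tau> < 1*1" using assms(1,2) by (intro mult_strict_mono) auto
  hence nz: "1 - \<tau>^2 \<noteq> 0" by (simp add: power2_eq_square)
  show "beta1_star N \<tau> - \<tau>*beta2_sstar N \<tau> - 2*(real N + 1) = 2*G2 M \<tau>"
    unfolding beta1_star_def beta2_sstar_def G2_def M_def by (simp add: algebra_simps power2_eq_square power3_eq_cube)
  show "DD N \<tau> - h^2 = (1-\<tau>^2)*(G2 M \<tau>)^2"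
    unfolding DD_def G2_def h_def M_def by (simp add: algebra_simps power2_eq_square power3_eq_cube)
  show "\<tau>*h = M/2 + \<tau> + G2 M \<tau>*(\<tau>^2-1/2)"
    unfolding G2_def h_def by (simp add: algebra_simps power2_eq_square power3_eq_cube)
  show "beta2_sstar N \<tau> = 2/(1-\<tau>^2)*(1+\<tau>*M+h)"
    unfolding beta2_sstar_def h_def M_def using nz by (simp add: field_simps)
  show "beta2_up N \<tau> = 2/(1-\<tau>^2)*(1+\<tau>*M+sqrt(DD N \<tau>))"
    unfolding beta2_up_def M_def by simp
  show "beta1_star N \<tau> = 2/(1-\<tau>^2)*((2*M+4*\<tau>)*(1-\<tau>^2))"
    unfolding beta1_star_def M_def using nz by (simp add: field_simps)
  show "beta1_low N \<tau> = 2/(1-\<tau>^2)*(M+\<tau>+\<tau>*sqrt(DD N \<tau>))"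
    unfolding beta1_low_def M_def by simp
  show "(2*M+4*\<tau>)*(1-\<tau>^2) = 3/2*M + 2*\<tau> + G2 M \<tau>/2"
    unfolding G2_def by (simp add: field_simps power2_eq_square power3_eq_cube)
qed


lemma P1:
  fixes N :: nat and \<tau> :: real
  assumes t: "0<\<tau>" "\<tau><1"
  defines "M \<equiv> real N + 1"
  shows "beta2_star N \<tau> - \<tau> * beta1_sstar N \<tau> = 2 \<longleftrightarrow> G1 M \<tau> = 0"
    and "beta2_star N \<tau> - \<tau> * beta1_sstar N \<tau> > 2 \<longleftrightarrow> G1 M \<tau> > 0"
    and "(beta2_star N \<tau> = beta2_low N \<tau> \<and> beta1_sstar N \<tau> = beta1_up N \<tau>) \<longleftrightarrow> G1 M \<tau> = 0"
    and "G1 M \<tau> \<noteq> 0 \<Longrightarrow> 0 < beta1_sstar N \<tau> \<and> beta1_sstar N \<tau> < beta1_up N \<tau>"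
proof -
  define h where "h = 4*\<tau>*(1+2*\<tau>*M)*(1-\<tau>^2) - M - \<tau>"
  define c where "c = 2/(1-\<tau>^2)"
  define s where "s = sqrt (DD N \<tau>)"
  note F = L1[OF t, of N, folded M_def h_def, folded c_def s_def]
  have "\<tau>*\<tau> < 1*1" using t by (intro mult_strict_mono) auto
  hence tt: "\<tau>^2 < 1" by (simp add: power2_eq_square)
  hence cpos: "c > 0" unfolding c_def by simp
  have Mpos: "M > 0" unfolding M_def by simp
  have Mr: "M = real N + 1" unfolding M_def ..
  have Mr2: "2*(real N + 1) = 2*M" using Mr by simp
  have F2: "DD N \<tau> - h^2 = (1-\<tau>^2)*(G1 M \<tau>)^2" using F(2) by (simp add: h_def)
  have F3: "\<tau>*h = 1/2 + M*\<tau> + G1 M \<tau>*(\<tau>^2-1/2)" using F(3) by (simp add: h_def)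
  have Dpos: "DD N \<tau> > 0" unfolding DD_def using t by (simp add: add_pos_pos)
  have s2: "s^2 = DD N \<tau>" unfolding s_def using Dpos by simp
  have s0: "s \<ge> 0" unfolding s_def using Dpos by simp
  show "beta2_star N \<tau> - \<tau> * beta1_sstar N \<tau> = 2 \<longleftrightarrow> G1 M \<tau> = 0" using F(1) Mr2 by linarith
  show "beta2_star N \<tau> - \<tau> * beta1_sstar N \<tau> > 2 \<longleftrightarrow> G1 M \<tau> > 0" using F(1) Mr2 by linarith
  have bseq: "beta1_sstar N \<tau> = beta1_up N \<tau> \<longleftrightarrow> h = s" using F(4,5) cpos by (auto simp: h_def)
  show "(beta2_star N \<tau> = beta2_low N \<tau> \<and> beta1_sstar N \<tau> = beta1_up N \<tau>) \<longleftrightarrow> G1 M \<tau> = 0"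
  proof
    assume "beta2_star N \<tau> = beta2_low N \<tau> \<and> beta1_sstar N \<tau> = beta1_up N \<tau>"
    hence "h = s" using bseq by simp
    hence "(1-\<tau>^2)*(G1 M \<tau>)^2 = 0" using F2 s2 by simp
    thus "G1 M \<tau> = 0" using tt by simp
  next
    assume g: "G1 M \<tau> = 0"
    have th: "\<tau>*h = 1/2 + M*\<tau>" using F3 g by simp
    have "\<tau>*h > 0" unfolding th using t Mpos by (simp add: add_pos_pos)
    hence "h > 0" using t by (simp add: zero_less_mult_iff)
    moreover have "h^2 = DD N \<tau>" using F2 g by simp
    ultimately have hs: "s = h" unfolding s_def by (intro real_sqrt_unique) auto
    have "(2+4*M*\<tau>)*(1-\<tau>^2) = 1+\<tau>*M+\<tau>*s" using F(8) g th hs by simp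
    hence "beta2_star N \<tau> = beta2_low N \<tau>" using F(6,7) by simp
    thus "beta2_star N \<tau> = beta2_low N \<tau> \<and> beta1_sstar N \<tau> = beta1_up N \<tau>" using bseq hs by simp
  qed
  assume g: "G1 M \<tau> \<noteq> 0"
  have "(1-\<tau>^2)*(G1 M \<tau>)^2 > 0" using g tt by simp
  hence "h^2 < DD N \<tau>" using F2 by linarith
  hence hs: "h < s" unfolding s_def by (rule real_less_rsqrt)
  have e4: "beta1_sstar N \<tau> = c*(M+\<tau>+h)" using F(4) by (simp add: h_def)
  have "c*(M+\<tau>+h) < c*(M+\<tau>+s)" using cpos hs by simp
  hence "beta1_sstar N \<tau> < beta1_up N \<tau>" unfolding e4 F(5) .
  moreover have "0 < beta1_sstar N \<tau>" unfolding beta1_sstar_def using t by (simp add: add_pos_pos)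
  ultimately show "0 < beta1_sstar N \<tau> \<and> beta1_sstar N \<tau> < beta1_up N \<tau>" by simp
qed

lemma P2:
  fixes N :: nat and \<tau> :: real
  assumes t: "0<\<tau>" "\<tau><1"
  defines "M \<equiv> real N + 1"
  shows "beta1_star N \<tau> - \<tau> * beta2_sstar N \<tau> = 2 * (real N + 1) \<longleftrightarrow> G2 M \<tau> = 0"
    and "beta1_star N \<tau> - \<tau> * beta2_sstar N \<tau> > 2 * (real N + 1) \<longleftrightarrow> G2 M \<tau> > 0"
    and "(beta1_star N \<tau> = beta1_low N \<tau> \<and> beta2_sstar N \<tau> = beta2_up N \<tau>) \<longleftrightarrow> G2 M \<tau> = 0"
    and "G2 M \<tau> \<noteq> 0 \<Longrightarrow> 0 < beta2_sstar N \<tau> \<and> beta2_sstar N \<tau> < beta2_up N \<tau>"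
proof -
  define h where "h = 4*\<tau>*(M+2*\<tau>)*(1-\<tau>^2) - 1 - \<tau>*M"
  define c where "c = 2/(1-\<tau>^2)"
  define s where "s = sqrt (DD N \<tau>)"
  note F = L2[OF t, of N, folded M_def h_def, folded c_def s_def]
  have "\<tau>*\<tau> < 1*1" using t by (intro mult_strict_mono) auto
  hence tt: "\<tau>^2 < 1" by (simp add: power2_eq_square)
  hence cpos: "c > 0" unfolding c_def by simp
  have Mpos: "M > 0" unfolding M_def by simp
  have Mr: "M = real N + 1" unfolding M_def ..
  have Mr2: "2*(real N + 1) = 2*M" using Mr by simp
  have F2: "DD N \<tau> - h^2 = (1-\<tau>^2)*(G2 M \<tau>)^2" using F(2) by (simp add: h_def)
  have F3: "\<tau>*h = M/2 + \<tau> + G2 M \<tau>*(\<tau>^2-1/2)" using F(3) by (simp add: h_def)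
  have Dpos: "DD N \<tau> > 0" unfolding DD_def using t by (simp add: add_pos_pos)
  have s2: "s^2 = DD N \<tau>" unfolding s_def using Dpos by simp
  have s0: "s \<ge> 0" unfolding s_def using Dpos by simp
  show "beta1_star N \<tau> - \<tau> * beta2_sstar N \<tau> = 2 * (real N + 1) \<longleftrightarrow> G2 M \<tau> = 0" using F(1) Mr2 by linarith
  show "beta1_star N \<tau> - \<tau> * beta2_sstar N \<tau> > 2 * (real N + 1) \<longleftrightarrow> G2 M \<tau> > 0" using F(1) Mr2 by linarith
  have bseq: "beta2_sstar N \<tau> = beta2_up N \<tau> \<longleftrightarrow> h = s" using F(4,5) cpos by (auto simp: h_def)
  show "(beta1_star N \<tau> = beta1_low N \<tau> \<and> beta2_sstar N \<tau> = beta2_up N \<tau>) \<longleftrightarrow> G2 M \<tau> = 0"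
  proof
    assume "beta1_star N \<tau> = beta1_low N \<tau> \<and> beta2_sstar N \<tau> = beta2_up N \<tau>"
    hence "h = s" using bseq by simp
    hence "(1-\<tau>^2)*(G2 M \<tau>)^2 = 0" using F2 s2 by simp
    thus "G2 M \<tau> = 0" using tt by simp
  next
    assume g: "G2 M \<tau> = 0"
    have th: "\<tau>*h = M/2 + \<tau>" using F3 g by simp
    have "\<tau>*h > 0" unfolding th using t Mpos by (simp add: add_pos_pos)
    hence "h > 0" using t by (simp add: zero_less_mult_iff)
    moreover have "h^2 = DD N \<tau>" using F2 g by simp
    ultimately have hs: "s = h" unfolding s_def by (intro real_sqrt_unique) auto
    have "(2*M+4*\<tau>)*(1-\<tau>^2) = M+\<tau>+\<tau>*s" using F(8) g th hs by simp
    hence "beta1_star N \<tau> = beta1_low N \<tau>" using F(6,7) by simp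
    thus "beta1_star N \<tau> = beta1_low N \<tau> \<and> beta2_sstar N \<tau> = beta2_up N \<tau>" using bseq hs by simp
  qed
  assume g: "G2 M \<tau> \<noteq> 0"
  have "(1-\<tau>^2)*(G2 M \<tau>)^2 > 0" using g tt by simp
  hence "h^2 < DD N \<tau>" using F2 by linarith
  hence hs: "h < s" unfolding s_def by (rule real_less_rsqrt)
  have e4: "beta2_sstar N \<tau> = c*(1+\<tau>*M+h)" using F(4) by (simp add: h_def)
  have "c*(1+\<tau>*M+h) < c*(1+\<tau>*M+s)" using cpos hs by simp
  hence "beta2_sstar N \<tau> < beta2_up N \<tau>" unfolding e4 F(5) .
  moreover have "0 < beta2_sstar N \<tau>" unfolding beta2_sstar_def using t by (simp add: add_pos_pos)
  ultimately show "0 < beta2_sstar N \<tau> \<and> beta2_sstar N \<tau> < beta2_up N \<tau>" by simp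
qed


lemma order12:
  assumes N: "N > 0" and t: "1/2 < t" "t < 1/sqrt 2" and g: "G2 (real N + 1) t = 0"
  shows "G1 (real N + 1) t > 0"
proof -
  have "t*t < 1/2" using sq_lt_half[of t] t by (simp add: power2_eq_square)
  moreover have "t*t > 1/4" using mult_strict_mono[of "1/2" t "1/2" t] t by simp
  ultimately have a: "4*(t*t) - 1 > 0" "1 - 2*(t*t) > 0" by auto
  have tp: "t > 0" using t by simp
  have "4*t*(1-2*(t*t)) > 0" using a tp by simp
  hence p: "(4*(t*t) - 1) + 4*t*(1-2*(t*t)) > 0" using a by linarith
  have "G1 (real N + 1) t - G2 (real N + 1) t = real N * ((4*(t*t) - 1) + 4*t*(1-2*(t*t)))"
    unfolding G1_def G2_def by (simp add: algebra_simps power2_eq_square power3_eq_cube)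
  moreover have "real N * ((4*(t*t) - 1) + 4*t*(1-2*(t*t))) > 0" using p N by simp
  ultimately show ?thesis using g by linarith
qed

theorem mainTheorem13:
  fixes N :: nat
  assumes "N > 0"
  shows "\<exists>t1 t2 :: real.
    \<comment> \<open>(i)\<close>
    1/2 < t1 \<and> t1 < 1 / sqrt 2 \<and>
    (\<forall>\<tau>\<in>{0<..<1}. beta2_star N \<tau> - \<tau> * beta1_sstar N \<tau> = 2 \<longleftrightarrow> \<tau> = t1) \<and>
    (\<forall>\<tau>\<in>{0<..<1}. (beta2_star N \<tau> = beta2_low N \<tau> \<and> beta1_sstar N \<tau> = beta1_up N \<tau>)
        \<longleftrightarrow> \<tau> = t1) \<and>
    (\<forall>\<tau>\<in>{0<..<1}. beta2_star N \<tau> - \<tau> * beta1_sstar N \<tau> > 2 \<longleftrightarrow> \<tau> < t1) \<and>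
    (\<forall>\<tau>\<in>{0<..<1} - {t1}. 0 < beta1_sstar N \<tau> \<and> beta1_sstar N \<tau> < beta1_up N \<tau>) \<and>
    \<comment> \<open>(ii)\<close>
    1/2 < t2 \<and> t2 < 1 / sqrt 2 \<and>
    (\<forall>\<tau>\<in>{0<..<1}. beta1_star N \<tau> - \<tau> * beta2_sstar N \<tau> = 2 * (real N + 1) \<longleftrightarrow> \<tau> = t2) \<and>
    (\<forall>\<tau>\<in>{0<..<1}. (beta1_star N \<tau> = beta1_low N \<tau> \<and> beta2_sstar N \<tau> = beta2_up N \<tau>)
        \<longleftrightarrow> \<tau> = t2) \<and>
    (\<forall>\<tau>\<in>{0<..<1}. beta1_star N \<tau> - \<tau> * beta2_sstar N \<tau> > 2 * (real N + 1) \<longleftrightarrow> \<tau> < t2) \<and>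
    (\<forall>\<tau>\<in>{0<..<1} - {t2}. 0 < beta2_sstar N \<tau> \<and> beta2_sstar N \<tau> < beta2_up N \<tau>) \<and>
    \<comment> \<open>ordering\<close>
    t2 < t1"
proof -
  define M where "M = real N + 1"
  have Mpos: "M > 0" unfolding M_def by simp
  obtain t1 where T1: "1/2 < t1" "t1 < 1/sqrt 2" "G1 M t1 = 0"
    "\<forall>\<tau>\<in>{0<..<1}. G1 M \<tau> = 0 \<longleftrightarrow> \<tau> = t1" "\<forall>\<tau>\<in>{0<..<1}. G1 M \<tau> > 0 \<longleftrightarrow> \<tau> < t1"
    using G1_root[OF Mpos] by blast
  obtain t2 where T2: "1/2 < t2" "t2 < 1/sqrt 2" "G2 M t2 = 0"
    "\<forall>\<tau>\<in>{0<..<1}. G2 M \<tau> = 0 \<longleftrightarrow> \<tau> = t2" "\<forall>\<tau>\<in>{0<..<1}. G2 M \<tau> > 0 \<longleftrightarrow> \<tau> < t2"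
    using G2_root[OF Mpos] by blast
  have isq1: "1/sqrt 2 < (1::real)" by (simp add: field_simps)
  have "t2 < 1" using T2(2) isq1 by linarith
  hence t2in: "t2 \<in> {0<..<1}" using T2(1) by auto
  have "G1 M t2 > 0" using order12[OF assms T2(1,2)] T2(3) unfolding M_def by simp
  hence ord: "t2 < t1" using T1(5) t2in by blast
  have A1: "\<forall>\<tau>\<in>{0<..<1}. beta2_star N \<tau> - \<tau> * beta1_sstar N \<tau> = 2 \<longleftrightarrow> \<tau> = t1"
  proof
    fix \<tau> :: real assume a: "\<tau> \<in> {0<..<1}"
    hence t: "0 < \<tau>" "\<tau> < 1" by auto
    have e1: "(beta2_star N \<tau> - \<tau> * beta1_sstar N \<tau> = 2) \<longleftrightarrow> G1 M \<tau> = 0" using P1(1)[OF t, of N] unfolding M_def .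
    have e2: "G1 M \<tau> = 0 \<longleftrightarrow> \<tau> = t1" using T1(4) a by blast
    show "beta2_star N \<tau> - \<tau> * beta1_sstar N \<tau> = 2 \<longleftrightarrow> \<tau> = t1" unfolding e1 e2 ..
  qed
  have A2: "\<forall>\<tau>\<in>{0<..<1}. (beta2_star N \<tau> = beta2_low N \<tau> \<and> beta1_sstar N \<tau> = beta1_up N \<tau>) \<longleftrightarrow> \<tau> = t1"
  proof
    fix \<tau> :: real assume a: "\<tau> \<in> {0<..<1}"
    hence t: "0 < \<tau>" "\<tau> < 1" by auto
    have e1: "((beta2_star N \<tau> = beta2_low N \<tau> \<and> beta1_sstar N \<tau> = beta1_up N \<tau>)) \<longleftrightarrow> G1 M \<tau> = 0" using P1(3)[OF t, of N] unfolding M_def .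
    have e2: "G1 M \<tau> = 0 \<longleftrightarrow> \<tau> = t1" using T1(4) a by blast
    show "(beta2_star N \<tau> = beta2_low N \<tau> \<and> beta1_sstar N \<tau> = beta1_up N \<tau>) \<longleftrightarrow> \<tau> = t1" unfolding e1 e2 ..
  qed
  have A3: "\<forall>\<tau>\<in>{0<..<1}. beta2_star N \<tau> - \<tau> * beta1_sstar N \<tau> > 2 \<longleftrightarrow> \<tau> < t1"
  proof
    fix \<tau> :: real assume a: "\<tau> \<in> {0<..<1}"
    hence t: "0 < \<tau>" "\<tau> < 1" by auto
    have e1: "(beta2_star N \<tau> - \<tau> * beta1_sstar N \<tau> > 2) \<longleftrightarrow> G1 M \<tau> > 0" using P1(2)[OF t, of N] unfolding M_def .
    have e2: "G1 M \<tau> > 0 \<longleftrightarrow> \<tau> < t1" using T1(5) a by blast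
    show "beta2_star N \<tau> - \<tau> * beta1_sstar N \<tau> > 2 \<longleftrightarrow> \<tau> < t1" unfolding e1 e2 ..
  qed
  have B1: "\<forall>\<tau>\<in>{0<..<1}. beta1_star N \<tau> - \<tau> * beta2_sstar N \<tau> = 2 * (real N + 1) \<longleftrightarrow> \<tau> = t2"
  proof
    fix \<tau> :: real assume a: "\<tau> \<in> {0<..<1}"
    hence t: "0 < \<tau>" "\<tau> < 1" by auto
    have e1: "(beta1_star N \<tau> - \<tau> * beta2_sstar N \<tau> = 2 * (real N + 1)) \<longleftrightarrow> G2 M \<tau> = 0" using P2(1)[OF t, of N] unfolding M_def .
    have e2: "G2 M \<tau> = 0 \<longleftrightarrow> \<tau> = t2" using T2(4) a by blast
    show "beta1_star N \<tau> - \<tau> * beta2_sstar N \<tau> = 2 * (real N + 1) \<longleftrightarrow> \<tau> = t2" unfolding e1 e2 ..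
  qed
  have B2: "\<forall>\<tau>\<in>{0<..<1}. (beta1_star N \<tau> = beta1_low N \<tau> \<and> beta2_sstar N \<tau> = beta2_up N \<tau>) \<longleftrightarrow> \<tau> = t2"
  proof
    fix \<tau> :: real assume a: "\<tau> \<in> {0<..<1}"
    hence t: "0 < \<tau>" "\<tau> < 1" by auto
    have e1: "((beta1_star N \<tau> = beta1_low N \<tau> \<and> beta2_sstar N \<tau> = beta2_up N \<tau>)) \<longleftrightarrow> G2 M \<tau> = 0" using P2(3)[OF t, of N] unfolding M_def .
    have e2: "G2 M \<tau> = 0 \<longleftrightarrow> \<tau> = t2" using T2(4) a by blast
    show "(beta1_star N \<tau> = beta1_low N \<tau> \<and> beta2_sstar N \<tau> = beta2_up N \<tau>) \<longleftrightarrow> \<tau> = t2" unfolding e1 e2 ..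
  qed
  have B3: "\<forall>\<tau>\<in>{0<..<1}. beta1_star N \<tau> - \<tau> * beta2_sstar N \<tau> > 2 * (real N + 1) \<longleftrightarrow> \<tau> < t2"
  proof
    fix \<tau> :: real assume a: "\<tau> \<in> {0<..<1}"
    hence t: "0 < \<tau>" "\<tau> < 1" by auto
    have e1: "(beta1_star N \<tau> - \<tau> * beta2_sstar N \<tau> > 2 * (real N + 1)) \<longleftrightarrow> G2 M \<tau> > 0" using P2(2)[OF t, of N] unfolding M_def .
    have e2: "G2 M \<tau> > 0 \<longleftrightarrow> \<tau> < t2" using T2(5) a by blast
    show "beta1_star N \<tau> - \<tau> * beta2_sstar N \<tau> > 2 * (real N + 1) \<longleftrightarrow> \<tau> < t2" unfolding e1 e2 ..
  qed
  have C1: "\<forall>\<tau>\<in>{0<..<1} - {t1}. 0 < beta1_sstar N \<tau> \<and> beta1_sstar N \<tau> < beta1_up N \<tau>"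
  proof
    fix \<tau> :: real assume a: "\<tau> \<in> {0<..<1} - {t1}"
    hence t: "0 < \<tau>" "\<tau> < 1" by auto
    have "G1 M \<tau> \<noteq> 0" using T1(4) a by auto
    thus "0 < beta1_sstar N \<tau> \<and> beta1_sstar N \<tau> < beta1_up N \<tau>" using P1(4)[OF t, of N, folded M_def] by auto
  qed
  have C2: "\<forall>\<tau>\<in>{0<..<1} - {t2}. 0 < beta2_sstar N \<tau> \<and> beta2_sstar N \<tau> < beta2_up N \<tau>"
  proof
    fix \<tau> :: real assume a: "\<tau> \<in> {0<..<1} - {t2}"
    hence t: "0 < \<tau>" "\<tau> < 1" by auto
    have "G2 M \<tau> \<noteq> 0" using T2(4) a by auto
    thus "0 < beta2_sstar N \<tau> \<and> beta2_sstar N \<tau> < beta2_up N \<tau>" using P2(4)[OF t, of N, folded M_def] by auto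
  qed
  show ?thesis
    apply (rule exI[of _ t1], rule exI[of _ t2])
    apply (intro conjI)
    by (fact T1(1) T1(2) T2(1) T2(2) ord A1 A2 A3 B1 B2 B3 C1 C2)+
qed

end
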